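(* Let $p\in[1,\infty]$. Let $\boldsymbol{\mu}_+\ne\boldsymbol{\mu}_-\in\mathbb{R}^d$, $\sigma>0$, and let $(\boldsymbol{X},Y)$ be random with $P(Y=+)=P(Y=-)=1/2$ and $\boldsymbol{X}\mid Y=i\sim N(\boldsymbol{\mu}_i,\sigma^2\boldsymbol{I}_d)$. Let $\boldsymbol{w}\in\mathbb{R}^d\setminus\{\boldsymbol{0}\}$, $b\in\mathbb{R}$, and let the linear classifier assign $\boldsymbol{x}$ to class $+$ iff $\boldsymbol{w}\cdot\boldsymbol{x}+b>0$. Let $\varepsilon>0$, $\delta\ge0$, $\boldsymbol{\mu}=\frac12(\boldsymbol{\mu}_+-\boldsymbol{\mu}_-)$, $\bar{\boldsymbol{\mu}}=\frac12(\boldsymbol{\mu}_++\boldsymbol{\mu}_-)$, $b'=\boldsymbol{w}\cdot\bar{\boldsymbol{\mu}}+b$, $\boldsymbol{\mu}_0=\boldsymbol{\mu}/\|\boldsymbol{\mu}\|_2$. Let $\boldsymbol{u}_p$ be a maximizer of $|\boldsymbol{w}\cdot\boldsymbol{v}|$ over $\{\boldsymbol{v}\in\mathbb{R}^d:\|\boldsymbol{v}\|_p\le\varepsilon,\ |\boldsymbol{v}\cdot\boldsymbol{\mu}_0|\le\delta\}$ chosen with $\boldsymbol{w}\cdot\boldsymbol{u}_p\ge0$. Let $p_m$ be the probability that $\boldsymbol{X}$ is misclassified and $p_{s-adv|p}$ the probability that $\boldsymbol{X}$ is correctly classified and there is $\boldsymbol{x}'$ with $\|\boldsymbol{X}-\boldsymbol{x}'\|_p\le\varepsilon$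 and $|(\boldsymbol{X}-\boldsymbol{x}')\cdot\boldsymbol{\mu}_0|\le\delta$ that is assigned a different class than $\boldsymbol{X}$. Then $$p_{s-adv|p}=1-p_m-\frac12\left[\Phi\!\left(\frac{\boldsymbol{w}\cdot\boldsymbol{\mu}+b'}{\|\boldsymbol{w}\|_2\sigma}-\frac{\boldsymbol{w}\cdot\boldsymbol{u}_p}{\|\boldsymbol{w}\|_2\sigma}\right)+\Phi\!\left(\frac{\boldsymbol{w}\cdot\boldsymbol{\mu}-b'}{\|\boldsymbol{w}\|_2\sigma}-\frac{\boldsymbol{w}\cdot\boldsymbol{u}_p}{\|\boldsymbol{w}\|_2\sigma}\right)\right].$$
   Context: $\Phi$ denotes the standard normal CDF. Since the feasible set is symmetric under $\boldsymbol{v}\mapsto-\boldsymbol{v}$, a maximizer with $\boldsymbol{w}\cdot\boldsymbol{u}_p\ge0$ exists, and then $\boldsymbol{w}\cdot\boldsymbol{u}_p$ is the maximum of $\boldsymbol{w}\cdot\boldsymbol{v}$ over the feasible set. *)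

theory Defs
  imports "HOL-Probability.Probability"
begin

definition Phi :: "real \<Rightarrow> real" where
  "Phi x = measure (density lborel (normal_density 0 1)) {..x}"

definition gauss_iso :: "real^'n \<Rightarrow> real \<Rightarrow> (real^'n) measure" where
  "gauss_iso m \<sigma> = density lborel (\<lambda>x. ennreal (\<Prod>i\<in>UNIV. normal_density (m$i) \<sigma> (x$i)))"

definition lp_norm :: "ereal \<Rightarrow> real^'n \<Rightarrow> real" where
  "lp_norm p v = (if p = \<infinity> then Max ((\<lambda>i. \<bar>v$i\<bar>) ` UNIV)
                  else (\<Sum>i\<in>UNIV. \<bar>v$i\<bar> powr real_of_ereal p) powr (1 / real_of_ereal p))"

text \<open>Linear classifier: class + (True) iff w.x + b > 0.\<close>
definition lin_cls :: "real^'n \<Rightarrow> real \<Rightarrow> real^'n \<Rightarrow> bool" where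
  "lin_cls w b x = (w \<bullet> x + b > 0)"

end

theory Submission
  imports Defs
begin

lemma Basis_vec_real: "(Basis :: (real^'n) set) = range (\<lambda>i. axis i 1)"
  by (auto simp: Basis_vec_def)

lemma prod_Basis_vec: "(\<Prod>b\<in>(Basis :: (real^'n) set). f b) = (\<Prod>i\<in>UNIV. f (axis i 1))"
proof -
  have "inj (\<lambda>i::'n. axis i (1::real))" by (auto simp: inj_def axis_eq_axis)
  then show ?thesis unfolding Basis_vec_real by (simp add: prod.reindex)
qed

lemma vl_meas: "(\<lambda>f. \<chi> i. f i) \<in> (PiM UNIV (\<lambda>i::'n. N i)) \<rightarrow>\<^sub>M (borel :: (real^'n) measure)"
  if "\<And>i. sets (N i) = sets borel" for N
proof -
  have c: "(\<lambda>f. f j) \<in> borel_measurable (PiM UNIV N)" for j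
  proof -
    have "(\<lambda>f. f j) \<in> PiM UNIV N \<rightarrow>\<^sub>M N j" by (rule measurable_component_singleton) simp
    then show ?thesis using measurable_cong_sets[OF refl that[of j]] by blast
  qed
  have "\<forall>b\<in>(Basis :: (real^'n) set). (\<lambda>f. (\<chi> i. f i) \<bullet> b) \<in> borel_measurable (PiM UNIV N)"
    unfolding Basis_vec_real by (auto simp: inner_axis c)
  then show ?thesis by (subst borel_measurable_euclidean_space) auto
qed

lemma gauss_iso_eq:
  fixes m :: "real^'n"
  assumes sp: "\<sigma> > 0"
  shows "gauss_iso m \<sigma> = distr (PiM UNIV (\<lambda>i. density lborel (normal_density (m$i) \<sigma>))) borel (\<lambda>f. \<chi> i. f i)"
proof -
  define D where "D = (\<lambda>i. density lborel (normal_density (m$i) \<sigma>))"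
  interpret D: product_prob_space D "UNIV :: 'n set"
    unfolding product_prob_space_def product_prob_space_axioms_def product_sigma_finite_def D_def
    using prob_space_normal_density[OF sp] by (auto intro: prob_space_imp_sigma_finite)
  let ?Q = "PiM UNIV D"
  interpret Q: prob_space ?Q by (rule D.P.prob_space_axioms)
  have sD: "sets (D i) = sets borel" for i by (simp add: D_def)
  have vm: "(\<lambda>f. \<chi> i. f i) \<in> ?Q \<rightarrow>\<^sub>M (borel :: (real^'n) measure)"
    by (rule vl_meas[OF sD])
  interpret V: prob_space "distr ?Q borel (\<lambda>f. \<chi> i. f i)"
    by (rule prob_space.prob_space_distr[OF D.P.prob_space_axioms vm])
  have boxQ: "emeasure (distr ?Q borel (\<lambda>f. \<chi> i. f i)) (box l u) =
     (\<Prod>i\<in>UNIV. \<integral>\<^sup>+t. ennreal (normal_density (m$i) \<sigma> t) * indicator {l$i<..<u$i} t \<partial>lborel)" for l u :: "real^'n"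
  proof -
    have "(\<lambda>f. \<chi> i. f i) -` box l u \<inter> space ?Q = PiE UNIV (\<lambda>i. {l$i<..<u$i})"
      by (auto simp: space_PiM D_def mem_box_cart PiE_iff)
    then have "emeasure (distr ?Q borel (\<lambda>f. \<chi> i. f i)) (box l u) = emeasure ?Q (PiE UNIV (\<lambda>i. {l$i<..<u$i}))"
      by (simp add: emeasure_distr[OF vm])
    also have "\<dots> = (\<Prod>i\<in>UNIV. emeasure (D i) {l$i<..<u$i})"
      by (rule D.emeasure_PiM) (auto simp: D_def)
    also have "\<dots> = (\<Prod>i\<in>UNIV. \<integral>\<^sup>+t. ennreal (normal_density (m$i) \<sigma> t) * indicator {l$i<..<u$i} t \<partial>lborel)"
      by (intro prod.cong refl) (simp add: D_def emeasure_density)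
    finally show ?thesis .
  qed
  have boxG: "emeasure (gauss_iso m \<sigma>) (box l u) =
     (\<Prod>i\<in>UNIV. \<integral>\<^sup>+t. ennreal (normal_density (m$i) \<sigma> t) * indicator {l$i<..<u$i} t \<partial>lborel)" for l u :: "real^'n"
  proof -
    define F where "F = (\<lambda>b t. ennreal (normal_density (m \<bullet> b) \<sigma> t) * indicator {l \<bullet> b<..<u \<bullet> b} t)"
    have pe: "ennreal (\<Prod>i\<in>UNIV. normal_density (m$i) \<sigma> (x$i)) * indicator (box l u) x =
        (\<Prod>b\<in>Basis. F b (x \<bullet> b))" for x :: "real^'n"
    proof (cases "x \<in> box l u")
      case True
      then show ?thesis by (simp add: prod_Basis_vec F_def inner_axis mem_box_cart prod_ennreal)
    next
      case False
      then obtain j where "\<not> (l$j < x$j \<and> x$j < u$j)" by (auto simp: mem_box_cart)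
      then have "F (axis j 1) (x \<bullet> axis j 1) = 0" by (simp add: F_def inner_axis)
      then have z: "(\<Prod>b\<in>Basis. F b (x \<bullet> b)) = 0"
        unfolding prod_Basis_vec by (intro prod_zero) auto
      show ?thesis using False by (subst z) simp
    qed
    have "emeasure (gauss_iso m \<sigma>) (box l u) = \<integral>\<^sup>+x. (\<Prod>b\<in>Basis. F b (x \<bullet> b)) \<partial>lborel"
      unfolding gauss_iso_def by (subst emeasure_density) (auto simp: pe)
    also have "\<dots> = (\<Prod>b\<in>Basis. \<integral>\<^sup>+t. F b t \<partial>lborel)"
      by (rule nn_integral_lborel_prod) (auto simp: F_def)
    also have "\<dots> = (\<Prod>i\<in>UNIV. \<integral>\<^sup>+t. ennreal (normal_density (m$i) \<sigma> t) * indicator {l$i<..<u$i} t \<partial>lborel)"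
      by (simp add: prod_Basis_vec F_def inner_axis)
    finally show ?thesis .
  qed
  have "distr ?Q borel (\<lambda>f. \<chi> i. f i) = gauss_iso m \<sigma>"
  proof (rule measure_eqI_generator_eq[where E="range (\<lambda>(a, b). box a b)" and \<Omega>=UNIV
        and A="\<lambda>n. box (- (real n *\<^sub>R One)) (real n *\<^sub>R One)"])
    show "Int_stable (range (\<lambda>(a, b). box a (b::real^'n)))"
      by (auto simp: Int_stable_def box_Int_box)
    show "range (\<lambda>(a, b). box a (b::real^'n)) \<subseteq> Pow UNIV" by auto
    show "sets (distr ?Q borel (\<lambda>f. \<chi> i. f i)) = sigma_sets UNIV (range (\<lambda>(a, b). box a b))"
      by (simp add: borel_eq_box)
    show "sets (gauss_iso m \<sigma>) = sigma_sets UNIV (range (\<lambda>(a, b). box a b))"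
      by (simp add: gauss_iso_def borel_eq_box)
    show "range (\<lambda>n::nat. box (- (real n *\<^sub>R One)) (real n *\<^sub>R One)) \<subseteq> range (\<lambda>(a, b). box a (b::real^'n))"
      by auto
    show "(\<Union>n. box (- (real n *\<^sub>R One)) (real n *\<^sub>R One)) = (UNIV :: (real^'n) set)"
      by (rule UN_box_eq_UNIV)
    show "emeasure (distr ?Q borel (\<lambda>f. \<chi> i. f i)) (box (- (real n *\<^sub>R One)) (real n *\<^sub>R One)) \<noteq> \<infinity>" for n
      using V.emeasure_finite by simp
    show "emeasure (distr ?Q borel (\<lambda>f. \<chi> i. f i)) X = emeasure (gauss_iso m \<sigma>) X"
      if "X \<in> range (\<lambda>(a, b). box a b)" for X
      using that boxQ boxG by auto
  qed
  then show ?thesis by (simp add: D_def)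
qed


lemma gauss_lin:
  fixes m w :: "real^'n"
  assumes sp: "\<sigma> > 0" and w0: "w \<noteq> 0"
  shows "distr (gauss_iso m \<sigma>) lborel (\<lambda>x. w \<bullet> x + b) = density lborel (normal_density (w \<bullet> m + b) (norm w * \<sigma>))"
proof -
  define D where "D = (\<lambda>i. density lborel (normal_density (m$i) \<sigma>))"
  interpret D: product_prob_space D "UNIV :: 'n set"
    unfolding product_prob_space_def product_prob_space_axioms_def product_sigma_finite_def D_def
    using prob_space_normal_density[OF sp] by (auto intro: prob_space_imp_sigma_finite)
  let ?Q = "PiM UNIV D"
  have PQ: "prob_space ?Q" by (rule D.P.prob_space_axioms)
  have sD: "sets (D i) = sets borel" for i by (simp add: D_def)
  have vm: "(\<lambda>f. \<chi> i. f i) \<in> ?Q \<rightarrow>\<^sub>M (borel :: (real^'n) measure)"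
    by (rule vl_meas[OF sD])
  have comp: "distr ?Q (D i) (\<lambda>f. f i) = D i" for i
    by (rule distr_PiM_component) (auto simp: D_def prob_space_normal_density[OF sp])
  have distc: "distributed ?Q lborel (\<lambda>f. f i) (normal_density (m$i) \<sigma>)" for i
  proof -
    have "distr ?Q lborel (\<lambda>f. f i) = distr ?Q (D i) (\<lambda>f. f i)"
      by (rule distr_cong) (auto simp: sD)
    then have "distr ?Q lborel (\<lambda>f. f i) = density lborel (normal_density (m$i) \<sigma>)"
      using comp by (simp add: D_def)
    moreover have "(\<lambda>f. f i) \<in> ?Q \<rightarrow>\<^sub>M lborel"
    proof -
      have cm: "(\<lambda>f. f i) \<in> ?Q \<rightarrow>\<^sub>M D i"
        by (rule measurable_component_singleton) simp
      have "(\<lambda>f. f i) \<in> ?Q \<rightarrow>\<^sub>M borel" using cm measurable_cong_sets[OF refl sD[of i]] by blast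
      then show ?thesis by simp
    qed
    ultimately show ?thesis unfolding distributed_def by auto
  qed
  have ind: "prob_space.indep_vars ?Q D (\<lambda>i f. f i) UNIV"
  proof -
    have "distr ?Q (PiM UNIV D) (\<lambda>x. \<lambda>i\<in>UNIV. x i) = ?Q"
      by (simp add: restrict_def)
    also have "\<dots> = PiM UNIV (\<lambda>i. distr ?Q (D i) (\<lambda>f. f i))"
      by (simp add: comp)
    finally show ?thesis
      by (subst prob_space.indep_vars_iff_distr_eq_PiM[OF PQ]) auto
  qed
  define I where "I = {i. w$i \<noteq> 0}"
  have Ine: "I \<noteq> {}" using w0 by (auto simp: I_def vec_eq_iff)
  have ind2: "prob_space.indep_vars ?Q (\<lambda>_. borel) (\<lambda>i f. w$i * f i) I"
  proof -
    have "prob_space.indep_vars ?Q (\<lambda>_. borel) (\<lambda>i. (\<lambda>t. w$i * t) \<circ> (\<lambda>f. f i)) UNIV"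
      by (rule prob_space.indep_vars_compose[OF PQ ind]) (simp add: measurable_cong_sets[OF sD refl])
    then have "prob_space.indep_vars ?Q (\<lambda>_. borel) (\<lambda>i f. w$i * f i) UNIV"
      by (simp add: o_def)
    then show ?thesis
      using prob_space.indep_vars_subset[OF PQ] by blast
  qed
  have d1: "distributed ?Q lborel (\<lambda>f. w$i * f i) (normal_density (w$i * m$i) (\<bar>w$i\<bar> * \<sigma>))" if "i \<in> I" for i
    using prob_space.normal_density_affine[OF PQ distc sp, of "w$i" 0] that by (simp add: I_def)
  have d2: "distributed ?Q lborel (\<lambda>f. \<Sum>i\<in>I. w$i * f i)
      (normal_density (\<Sum>i\<in>I. w$i * m$i) (sqrt (\<Sum>i\<in>I. (\<bar>w$i\<bar> * \<sigma>)\<^sup>2)))"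
    by (rule prob_space.sum_indep_normal[OF PQ _ Ine ind2 _ d1]) (auto simp: I_def sp)
  have s1: "(\<Sum>i\<in>I. w$i * m$i) = w \<bullet> m"
    unfolding inner_vec_def inner_real_def by (rule sum.mono_neutral_left) (auto simp: I_def)
  have s2: "sqrt (\<Sum>i\<in>I. (\<bar>w$i\<bar> * \<sigma>)\<^sup>2) = norm w * \<sigma>"
  proof -
    have "(\<Sum>i\<in>I. (\<bar>w$i\<bar> * \<sigma>)\<^sup>2) = (\<Sum>i\<in>UNIV. (w$i)\<^sup>2) * \<sigma>\<^sup>2"
      unfolding sum_distrib_right power_mult_distrib power2_abs
      by (rule sum.mono_neutral_left) (auto simp: I_def)
    then show ?thesis using sp
      by (simp add: norm_vec_def L2_set_def real_sqrt_mult)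
  qed
  have d3: "distributed ?Q lborel (\<lambda>f. b + 1 * (\<Sum>i\<in>I. w$i * f i))
      (normal_density (b + 1 * (w \<bullet> m)) (\<bar>1\<bar> * (norm w * \<sigma>)))"
    using prob_space.normal_density_affine[OF PQ d2[unfolded s1 s2], of 1 b] sp w0 by simp
  have fe: "(\<lambda>x. w \<bullet> x + b) \<circ> (\<lambda>f. \<chi> i. f i) = (\<lambda>f. b + 1 * (\<Sum>i\<in>I. w$i * f i))"
  proof
    fix f :: "'n \<Rightarrow> real"
    have "w \<bullet> (\<chi> i. f i) = (\<Sum>i\<in>I. w$i * f i)"
      unfolding inner_vec_def inner_real_def vec_lambda_beta by (rule sum.mono_neutral_right) (auto simp: I_def)
    then show "((\<lambda>x. w \<bullet> x + b) \<circ> (\<lambda>f. \<chi> i. f i)) f = b + 1 * (\<Sum>i\<in>I. w$i * f i)" by simp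
  qed
  have "distr (gauss_iso m \<sigma>) lborel (\<lambda>x. w \<bullet> x + b) = distr ?Q lborel ((\<lambda>x. w \<bullet> x + b) \<circ> (\<lambda>f. \<chi> i. f i))"
    unfolding gauss_iso_eq[OF sp] D_def[symmetric]
    by (rule distr_distr) (auto intro: vm)
  also have "\<dots> = density lborel (normal_density (w \<bullet> m + b) (norm w * \<sigma>))"
    using d3 unfolding fe distributed_def by (simp add: add.commute)
  finally show ?thesis .
qed


lemma normal_cdf:
  assumes s: "s > 0"
  shows "measure (density lborel (normal_density \<mu> s)) {..t} = Phi ((t - \<mu>) / s)"
proof -
  let ?N = "density lborel (normal_density \<mu> s)"
  have PN: "prob_space ?N" by (rule prob_space_normal_density[OF s])
  have "distributed ?N lborel (\<lambda>x. x) (normal_density \<mu> s)"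
  proof -
    have "distr ?N lborel (\<lambda>x. x) = distr ?N ?N (\<lambda>x. x)" by (rule distr_cong) auto
    then show ?thesis unfolding distributed_def by simp
  qed
  then have "distributed ?N lborel (\<lambda>x. (x - \<mu>) / s) (normal_density 0 1)"
    using prob_space.normal_standard_normal_convert[OF PN s] by simp
  then have e: "distr ?N lborel (\<lambda>x. (x - \<mu>) / s) = density lborel (normal_density 0 1)"
    and mm: "(\<lambda>x. (x - \<mu>) / s) \<in> ?N \<rightarrow>\<^sub>M lborel"
    unfolding distributed_def by auto
  have "Phi ((t - \<mu>) / s) = measure (distr ?N lborel (\<lambda>x. (x - \<mu>) / s)) {..(t - \<mu>) / s}"
    unfolding Phi_def e ..
  also have "\<dots> = measure ?N ((\<lambda>x. (x - \<mu>) / s) -` {..(t - \<mu>) / s} \<inter> space ?N)"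
    by (rule measure_distr[OF mm]) simp
  also have "(\<lambda>x. (x - \<mu>) / s) -` {..(t - \<mu>) / s} \<inter> space ?N = {..t}"
    using s by (auto simp: divide_right_mono le_divide_eq_1 divide_le_cancel)
  finally show ?thesis by simp
qed

lemma density_singleton0: "emeasure (density lborel (\<lambda>x. ennreal (f x))) {a} = 0"
  if "f \<in> borel_measurable borel"
proof -
  have "emeasure (density lborel (\<lambda>x. ennreal (f x))) {a} = \<integral>\<^sup>+x. ennreal (f x) * indicator {a} x \<partial>lborel"
    using that by (subst emeasure_density) auto
  also have "\<dots> = \<integral>\<^sup>+x. 0 \<partial>lborel"
  proof -
    have "AE x in lborel. ennreal (f x) * indicator {a} x = 0"
      using AE_lborel_singleton[of a] by eventually_elim auto
    from nn_integral_cong_AE[OF this] show ?thesis by simp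
  qed
  finally show ?thesis by simp
qed

lemma Phi_neg: "Phi (- x) = 1 - Phi x"
proof -
  let ?N = "density lborel (normal_density 0 1)"
  have PN: "prob_space ?N" by (rule prob_space_normal_density) simp
  interpret N: prob_space ?N by (rule PN)
  have "distributed ?N lborel (\<lambda>x. x) (normal_density 0 1)"
  proof -
    have "distr ?N lborel (\<lambda>x. x) = distr ?N ?N (\<lambda>x. x)" by (rule distr_cong) auto
    then show ?thesis unfolding distributed_def by simp
  qed
  from prob_space.normal_density_affine[OF PN this, of "-1" 0]
  have "distributed ?N lborel (\<lambda>x. - x) (normal_density 0 1)" by simp
  then have e: "distr ?N lborel (\<lambda>x. - x) = ?N" and mm: "(\<lambda>x. - x) \<in> ?N \<rightarrow>\<^sub>M lborel"
    unfolding distributed_def by auto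
  have "Phi (- x) = measure (distr ?N lborel (\<lambda>x. - x)) {..- x}"
    unfolding Phi_def e ..
  also have "\<dots> = measure ?N ((\<lambda>x. - x) -` {..- x} \<inter> space ?N)"
    by (rule measure_distr[OF mm]) simp
  also have "(\<lambda>x. - x) -` {..- x} \<inter> space ?N = UNIV - {..<x}" by auto
  also have "measure ?N (UNIV - {..<x}) = 1 - measure ?N {..<x}"
    using N.prob_compl[of "{..<x}"] by simp
  also have "measure ?N {..<x} = measure ?N {..x}"
  proof -
    have "measure ?N ({..<x} \<union> {x}) = measure ?N {..<x} + measure ?N {x}"
      by (rule N.finite_measure_Union) auto
    moreover have "{..<x} \<union> {x} = {..x}" by auto
    ultimately have "measure ?N {..x} = measure ?N {..<x} + measure ?N {x}" by simp
    moreover have "measure ?N {x} = 0"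
      using density_singleton0[of "normal_density 0 1" x] by (simp add: measure_def)
    ultimately show ?thesis by simp
  qed
  finally show ?thesis unfolding Phi_def by simp
qed


lemma lin_meas:
  fixes m w :: "real^'n"
  assumes sp: "\<sigma> > 0" and w0: "w \<noteq> 0" and I: "I \<in> sets borel"
  shows "measure (gauss_iso m \<sigma>) ((\<lambda>x. w \<bullet> x + b) -` I) =
         measure (density lborel (normal_density (w \<bullet> m + b) (norm w * \<sigma>))) I"
proof -
  have fm: "(\<lambda>x. w \<bullet> x + b) \<in> gauss_iso m \<sigma> \<rightarrow>\<^sub>M lborel"
    unfolding gauss_iso_def by simp
  have "measure (distr (gauss_iso m \<sigma>) lborel (\<lambda>x. w \<bullet> x + b)) I =
      measure (gauss_iso m \<sigma>) ((\<lambda>x. w \<bullet> x + b) -` I \<inter> space (gauss_iso m \<sigma>))"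
    by (rule measure_distr[OF fm]) (simp add: I)
  then show ?thesis unfolding gauss_lin[OF sp w0] by (simp add: gauss_iso_def)
qed

lemma N_Ioc:
  assumes s: "s > 0" and ab: "a \<le> b"
  shows "measure (density lborel (normal_density \<mu> s)) {a<..b} = Phi ((b - \<mu>) / s) - Phi ((a - \<mu>) / s)"
proof -
  interpret N: prob_space "density lborel (normal_density \<mu> s)" by (rule prob_space_normal_density[OF s])
  have "{a<..b} = {..b} - {..a}" by auto
  then have "measure (density lborel (normal_density \<mu> s)) {a<..b} =
     measure (density lborel (normal_density \<mu> s)) {..b} - measure (density lborel (normal_density \<mu> s)) {..a}"
    using ab by (simp add: N.finite_measure_Diff)
  then show ?thesis by (simp add: normal_cdf[OF s])
qed

lemma N_Ioi:
  assumes s: "s > 0"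
  shows "measure (density lborel (normal_density \<mu> s)) {a<..} = 1 - Phi ((a - \<mu>) / s)"
proof -
  interpret N: prob_space "density lborel (normal_density \<mu> s)" by (rule prob_space_normal_density[OF s])
  have "{a<..} = UNIV - {..a}" by auto
  then have "measure (density lborel (normal_density \<mu> s)) {a<..} = 1 - measure (density lborel (normal_density \<mu> s)) {..a}"
    using N.prob_compl[of "{..a}"] by simp
  then show ?thesis by (simp add: normal_cdf[OF s])
qed

theorem theorem5:
  fixes M :: "'a measure" and X :: "'a \<Rightarrow> real^'n" and Y :: "'a \<Rightarrow> bool"
    and p :: ereal and mu_p mu_m w u :: "real^'n" and \<sigma> b \<epsilon> \<delta> :: real
  assumes "prob_space M"
    and "1 \<le> p"
    and "mu_p \<noteq> mu_m" and "\<sigma> > 0"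
    and X_meas: "X \<in> measurable M borel" and Y_meas: "Y \<in> measurable M (count_space UNIV)"
    and "measure M {\<omega>\<in>space M. Y \<omega>} = 1/2" and "measure M {\<omega>\<in>space M. \<not> Y \<omega>} = 1/2"
    and cond_pos: "\<And>A. A \<in> sets borel \<Longrightarrow>
        measure M {\<omega>\<in>space M. Y \<omega> \<and> X \<omega> \<in> A} = 1/2 * measure (gauss_iso mu_p \<sigma>) A"
    and cond_neg: "\<And>A. A \<in> sets borel \<Longrightarrow>
        measure M {\<omega>\<in>space M. \<not> Y \<omega> \<and> X \<omega> \<in> A} = 1/2 * measure (gauss_iso mu_m \<sigma>) A"
    and "w \<noteq> 0" and "\<epsilon> > 0" and "\<delta> \<ge> 0"
    and u_feas: "lp_norm p u \<le> \<epsilon>"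
        "\<bar>u \<bullet> ((1/2) *\<^sub>R (mu_p - mu_m) /\<^sub>R norm ((1/2) *\<^sub>R (mu_p - mu_m)))\<bar> \<le> \<delta>"
    and u_max: "\<And>v. lp_norm p v \<le> \<epsilon> \<Longrightarrow>
        \<bar>v \<bullet> ((1/2) *\<^sub>R (mu_p - mu_m) /\<^sub>R norm ((1/2) *\<^sub>R (mu_p - mu_m)))\<bar> \<le> \<delta> \<Longrightarrow>
        \<bar>w \<bullet> v\<bar> \<le> \<bar>w \<bullet> u\<bar>"
    and u_sign: "w \<bullet> u \<ge> 0"
  shows
    "let mu = (1/2) *\<^sub>R (mu_p - mu_m);
         mubar = (1/2) *\<^sub>R (mu_p + mu_m);
         b' = w \<bullet> mubar + b;
         mu0 = mu /\<^sub>R norm mu;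
         pm = measure M {\<omega>\<in>space M. lin_cls w b (X \<omega>) \<noteq> Y \<omega>};
         psadv = measure M {\<omega>\<in>space M. lin_cls w b (X \<omega>) = Y \<omega> \<and>
                   (\<exists>x'. lp_norm p (X \<omega> - x') \<le> \<epsilon> \<and> \<bar>(X \<omega> - x') \<bullet> mu0\<bar> \<le> \<delta> \<and>
                         lin_cls w b x' \<noteq> lin_cls w b (X \<omega>))}
     in psadv = 1 - pm - 1/2 * (Phi ((w \<bullet> mu + b') / (norm w * \<sigma>) - (w \<bullet> u) / (norm w * \<sigma>))
                              + Phi ((w \<bullet> mu - b') / (norm w * \<sigma>) - (w \<bullet> u) / (norm w * \<sigma>)))"
proof -
  interpret M: prob_space M by fact
  define mu0 where "mu0 = (1/2) *\<^sub>R (mu_p - mu_m) /\<^sub>R norm ((1/2) *\<^sub>R (mu_p - mu_m))"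
  define c where "c = w \<bullet> u"
  define s where "s = norm w * \<sigma>"
  define mp where "mp = w \<bullet> mu_p + b"
  define mm where "mm = w \<bullet> mu_m + b"
  have s_pos: "s > 0" using \<open>w \<noteq> 0\<close> \<open>\<sigma> > 0\<close> by (simp add: s_def)
  have c_nn: "c \<ge> 0" using u_sign by (simp add: c_def)
  define feas where "feas v \<longleftrightarrow> lp_norm p v \<le> \<epsilon> \<and> \<bar>v \<bullet> mu0\<bar> \<le> \<delta>" for v
  have feas_u: "feas u" using u_feas by (simp add: feas_def mu0_def)
  have feas_neg: "feas (- v)" if "feas v" for v
  proof -
    have "lp_norm p (- v) = lp_norm p v" unfolding lp_norm_def by simp
    then show ?thesis using that by (simp add: feas_def)
  qed
  have bnd: "w \<bullet> v \<le> c \<and> - c \<le> w \<bullet> v" if "feas v" for v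
  proof -
    have "\<bar>w \<bullet> v\<bar> \<le> \<bar>w \<bullet> u\<bar>" using u_max that by (simp add: feas_def mu0_def)
    then show ?thesis using u_sign by (simp add: c_def abs_le_iff)
  qed
  have key: "(\<exists>x'. lp_norm p (x - x') \<le> \<epsilon> \<and> \<bar>(x - x') \<bullet> mu0\<bar> \<le> \<delta> \<and> lin_cls w b x' \<noteq> lin_cls w b x)
      \<longleftrightarrow> (if 0 < w \<bullet> x + b then w \<bullet> x + b \<le> c else - c < w \<bullet> x + b)" for x
  proof -
    have "(\<exists>x'. lp_norm p (x - x') \<le> \<epsilon> \<and> \<bar>(x - x') \<bullet> mu0\<bar> \<le> \<delta> \<and> lin_cls w b x' \<noteq> lin_cls w b x)
       \<longleftrightarrow> (\<exists>v. feas v \<and> lin_cls w b (x - v) \<noteq> lin_cls w b x)"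
    proof
      assume "\<exists>x'. lp_norm p (x - x') \<le> \<epsilon> \<and> \<bar>(x - x') \<bullet> mu0\<bar> \<le> \<delta> \<and> lin_cls w b x' \<noteq> lin_cls w b x"
      then obtain x' where "lp_norm p (x - x') \<le> \<epsilon> \<and> \<bar>(x - x') \<bullet> mu0\<bar> \<le> \<delta> \<and> lin_cls w b x' \<noteq> lin_cls w b x" by blast
      then show "\<exists>v. feas v \<and> lin_cls w b (x - v) \<noteq> lin_cls w b x"
        by (intro exI[of _ "x - x'"]) (simp add: feas_def)
    next
      assume "\<exists>v. feas v \<and> lin_cls w b (x - v) \<noteq> lin_cls w b x"
      then obtain v where "feas v \<and> lin_cls w b (x - v) \<noteq> lin_cls w b x" by blast
      then show "\<exists>x'. lp_norm p (x - x') \<le> \<epsilon> \<and> \<bar>(x - x') \<bullet> mu0\<bar> \<le> \<delta> \<and> lin_cls w b x' \<noteq> lin_cls w b x"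
        by (intro exI[of _ "x - v"]) (simp add: feas_def)
    qed
    also have "\<dots> \<longleftrightarrow> (if 0 < w \<bullet> x + b then w \<bullet> x + b \<le> c else - c < w \<bullet> x + b)"
    proof (cases "0 < w \<bullet> x + b")
      case True
      have "(\<exists>v. feas v \<and> lin_cls w b (x - v) \<noteq> lin_cls w b x) \<longleftrightarrow> w \<bullet> x + b \<le> c"
      proof
        assume "\<exists>v. feas v \<and> lin_cls w b (x - v) \<noteq> lin_cls w b x"
        then obtain v where v: "feas v" "lin_cls w b (x - v) \<noteq> lin_cls w b x" by blast
        then have "w \<bullet> x + b - w \<bullet> v \<le> 0" using True by (simp add: lin_cls_def inner_diff_right)
        then show "w \<bullet> x + b \<le> c" using bnd[OF v(1)] by linarith
      next
        assume "w \<bullet> x + b \<le> c"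
        then show "\<exists>v. feas v \<and> lin_cls w b (x - v) \<noteq> lin_cls w b x"
          using True feas_u by (intro exI[of _ u]) (simp add: lin_cls_def inner_diff_right c_def)
      qed
      then show ?thesis using True by simp
    next
      case False
      have "(\<exists>v. feas v \<and> lin_cls w b (x - v) \<noteq> lin_cls w b x) \<longleftrightarrow> - c < w \<bullet> x + b"
      proof
        assume "\<exists>v. feas v \<and> lin_cls w b (x - v) \<noteq> lin_cls w b x"
        then obtain v where v: "feas v" "lin_cls w b (x - v) \<noteq> lin_cls w b x" by blast
        then have "w \<bullet> x + b - w \<bullet> v > 0" using False by (simp add: lin_cls_def inner_diff_right)
        then show "- c < w \<bullet> x + b" using bnd[OF v(1)] by linarith
      next
        assume "- c < w \<bullet> x + b"
        then show "\<exists>v. feas v \<and> lin_cls w b (x - v) \<noteq> lin_cls w b x"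
          using False feas_neg[OF feas_u] by (intro exI[of _ "- u"]) (simp add: lin_cls_def inner_add_right c_def)
      qed
      then show ?thesis using False by simp
    qed
    finally show ?thesis .
  qed
  define L where "L I = (\<lambda>x::real^'n. w \<bullet> x + b) -` I" for I
  have Lb: "L I \<in> sets borel" if "I \<in> sets borel" for I
  proof -
    have fm: "(\<lambda>x::real^'n. w \<bullet> x + b) \<in> borel_measurable borel" by simp
    show ?thesis using measurable_sets[OF fm that] by (simp add: L_def)
  qed
  note [measurable] = X_meas Y_meas
  have evY: "{\<omega>\<in>space M. Y \<omega> \<and> X \<omega> \<in> B} \<in> sets M" if [measurable]: "B \<in> sets borel" for B
    by measurable
  have evN: "{\<omega>\<in>space M. \<not> Y \<omega> \<and> X \<omega> \<in> B} \<in> sets M" if [measurable]: "B \<in> sets borel" for B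
    by measurable
  have mP: "measure M {\<omega>\<in>space M. Y \<omega> \<and> X \<omega> \<in> L I} = 1/2 * measure (density lborel (normal_density mp s)) I"
    if "I \<in> sets borel" for I
    using cond_pos[OF Lb[OF that]] lin_meas[OF \<open>\<sigma> > 0\<close> \<open>w \<noteq> 0\<close> that, of mu_p b]
    by (simp add: L_def mp_def s_def)
  have mN: "measure M {\<omega>\<in>space M. \<not> Y \<omega> \<and> X \<omega> \<in> L I} = 1/2 * measure (density lborel (normal_density mm s)) I"
    if "I \<in> sets borel" for I
    using cond_neg[OF Lb[OF that]] lin_meas[OF \<open>\<sigma> > 0\<close> \<open>w \<noteq> 0\<close> that, of mu_m b]
    by (simp add: L_def mm_def s_def)
  have union: "measure M ({\<omega>\<in>space M. Y \<omega> \<and> X \<omega> \<in> L I} \<union> {\<omega>\<in>space M. \<not> Y \<omega> \<and> X \<omega> \<in> L J}) =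
      1/2 * measure (density lborel (normal_density mp s)) I + 1/2 * measure (density lborel (normal_density mm s)) J"
    if "I \<in> sets borel" "J \<in> sets borel" for I J
    using M.finite_measure_Union[OF evY[OF Lb[OF that(1)]] evN[OF Lb[OF that(2)]]] mP[OF that(1)] mN[OF that(2)]
    by auto
  have set_adv: "{\<omega>\<in>space M. lin_cls w b (X \<omega>) = Y \<omega> \<and>
                   (\<exists>x'. lp_norm p (X \<omega> - x') \<le> \<epsilon> \<and> \<bar>(X \<omega> - x') \<bullet> mu0\<bar> \<le> \<delta> \<and>
                         lin_cls w b x' \<noteq> lin_cls w b (X \<omega>))} =
      {\<omega>\<in>space M. Y \<omega> \<and> X \<omega> \<in> L {0<..c}} \<union> {\<omega>\<in>space M. \<not> Y \<omega> \<and> X \<omega> \<in> L {-c<..0}}"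
    unfolding key by (auto simp: L_def lin_cls_def)
  have set_m: "{\<omega>\<in>space M. lin_cls w b (X \<omega>) \<noteq> Y \<omega>} =
      {\<omega>\<in>space M. Y \<omega> \<and> X \<omega> \<in> L {..0}} \<union> {\<omega>\<in>space M. \<not> Y \<omega> \<and> X \<omega> \<in> L {0<..}}"
    by (auto simp: L_def lin_cls_def)
  have adv: "measure M {\<omega>\<in>space M. lin_cls w b (X \<omega>) = Y \<omega> \<and>
                   (\<exists>x'. lp_norm p (X \<omega> - x') \<le> \<epsilon> \<and> \<bar>(X \<omega> - x') \<bullet> mu0\<bar> \<le> \<delta> \<and>
                         lin_cls w b x' \<noteq> lin_cls w b (X \<omega>))} =
     1/2 * (Phi ((c - mp) / s) - Phi ((0 - mp) / s)) + 1/2 * (Phi ((0 - mm) / s) - Phi ((- c - mm) / s))"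
    unfolding set_adv using c_nn by (simp add: union N_Ioc[OF s_pos])
  have pm: "measure M {\<omega>\<in>space M. lin_cls w b (X \<omega>) \<noteq> Y \<omega>} =
     1/2 * Phi ((0 - mp) / s) + 1/2 * (1 - Phi ((0 - mm) / s))"
    unfolding set_m by (simp add: union N_Ioi[OF s_pos] normal_cdf[OF s_pos])
  have e1: "(w \<bullet> ((1/2) *\<^sub>R (mu_p - mu_m)) + (w \<bullet> ((1/2) *\<^sub>R (mu_p + mu_m)) + b)) / (norm w * \<sigma>)
       - (w \<bullet> u) / (norm w * \<sigma>) = (mp - c) / s"
  proof -
    have "w \<bullet> ((1/2) *\<^sub>R (mu_p - mu_m)) + (w \<bullet> ((1/2) *\<^sub>R (mu_p + mu_m)) + b) = mp"
      by (simp add: mp_def inner_diff_right inner_add_right field_simps)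
    then show ?thesis by (simp add: c_def s_def diff_divide_distrib)
  qed
  have e2: "(w \<bullet> ((1/2) *\<^sub>R (mu_p - mu_m)) - (w \<bullet> ((1/2) *\<^sub>R (mu_p + mu_m)) + b)) / (norm w * \<sigma>)
       - (w \<bullet> u) / (norm w * \<sigma>) = (- c - mm) / s"
  proof -
    have "w \<bullet> ((1/2) *\<^sub>R (mu_p - mu_m)) - (w \<bullet> ((1/2) *\<^sub>R (mu_p + mu_m)) + b) = - mm"
      by (simp add: mm_def inner_diff_right inner_add_right field_simps)
    then show ?thesis by (simp add: c_def s_def diff_divide_distrib)
  qed
  have ph: "Phi ((c - mp) / s) = 1 - Phi ((mp - c) / s)"
    using Phi_neg[of "(mp - c) / s"] by (simp add: minus_divide_left)
  show ?thesis
    unfolding Let_def mu0_def[symmetric] adv pm e1 e2 ph by (simp add: field_simps)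
qed

end
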